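(* Under the hypotheses of the main theorem (separable Hilbert space $H$; i.i.d. strongly measurable random operators $\Psi_1,\Psi_2,\dots$ with values in positive contractions, distributed as $\Psi$ with $\mathbb E\|\Psi x\|^2\ge C\|x\|^2$ for all $x$, where $0<C<1$), let $R_0=I$ and $R_n=(I-\Psi_n)\cdots(I-\Psi_1)$ for $n\ge1$. Then for every $x\in H$ and $n\ge0$, \[ \mathbb E\|R_nx\|^{2}\le(1-C)^{n}\|x\|^{2}, \] and consequently $\|R_nx\|\to0$ almost surely.
   Context: Random operators are measurable in the strong operator sense ($\omega\mapsto\Psi(\omega)x$ measurable for each $x$). A positive contraction is a selfadjoint $T$ with $0\le T\le I$. *)

theory Defs
  imports "HOL-Analysis.Analysis" "HOL-Probability.Probability"
begin

definition positive_contraction :: "('a::real_inner \<Rightarrow>\<^sub>L 'a) \<Rightarrow> bool" where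
  "positive_contraction T \<longleftrightarrow>
     (\<forall>x y. inner (T x) y = inner x (T y)) \<and>
     (\<forall>x. 0 \<le> inner (T x) x \<and> inner (T x) x \<le> inner x x)"

definition strongly_measurable_op :: "'w measure \<Rightarrow> ('w \<Rightarrow> ('a::real_normed_vector \<Rightarrow>\<^sub>L 'a)) \<Rightarrow> bool" where
  "strongly_measurable_op M \<Phi> \<longleftrightarrow> (\<forall>x. (\<lambda>\<omega>. \<Phi> \<omega> x) \<in> borel_measurable M)"

definition op_events :: "'w measure \<Rightarrow> ('w \<Rightarrow> ('a::real_normed_vector \<Rightarrow>\<^sub>L 'a)) \<Rightarrow> 'w set set" where
  "op_events M \<Phi> = sigma_sets (space M)
     {(\<lambda>\<omega>. \<Phi> \<omega> x) -` B \<inter> space M | x B. B \<in> sets borel}"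

definition op_fdd :: "'w measure \<Rightarrow> ('w \<Rightarrow> ('a::real_normed_vector \<Rightarrow>\<^sub>L 'a)) \<Rightarrow> 'a list \<Rightarrow> (nat \<Rightarrow> 'a) measure" where
  "op_fdd M \<Phi> xs = distr M (Pi\<^sub>M {..<length xs} (\<lambda>_. borel))
      (\<lambda>\<omega>. \<lambda>i\<in>{..<length xs}. \<Phi> \<omega> (xs ! i))"

text \<open>Products R_0 = I, R_{n+1} = (I - \<Psi>_{n+1}) R_n, where \<Psi>_{n+1} is \<Psi>s n.\<close>
primrec Rprod :: "(nat \<Rightarrow> 'w \<Rightarrow> ('a::real_normed_vector \<Rightarrow>\<^sub>L 'a)) \<Rightarrow> nat \<Rightarrow> 'w \<Rightarrow> ('a \<Rightarrow>\<^sub>L 'a)" where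
  "Rprod \<Psi>s 0 \<omega> = id_blinfun"
| "Rprod \<Psi>s (Suc n) \<omega> = (id_blinfun - \<Psi>s n \<omega>) o\<^sub>L Rprod \<Psi>s n \<omega>"

end

theory Submission
  imports Defs
begin

lemma pc_ineq:
  fixes T :: "'a::real_inner \<Rightarrow>\<^sub>L 'a"
  assumes "positive_contraction T"
  shows "(norm (T y))\<^sup>2 \<le> inner (T y) y"
    and "norm (T y) \<le> norm y"
    and "(norm (y - T y))\<^sup>2 \<le> (norm y)\<^sup>2 - (norm (T y))\<^sup>2"
proof -
  have sym: "\<And>u v. inner (T u) v = inner u (T v)"
    and pos: "\<And>u. 0 \<le> inner (T u) u" and le: "\<And>u. inner (T u) u \<le> inner u u"
    using assms unfolding positive_contraction_def by auto
  have "0 \<le> inner (T (y - T y)) (y - T y)" by (rule pos)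
  also have "\<dots> = inner (T y) y - inner (T y) (T y) - inner (T (T y)) y + inner (T (T y)) (T y)"
    by (simp add: blinfun.diff_right inner_diff_left inner_diff_right)
  also have "inner (T (T y)) y = inner (T y) (T y)" using sym[of "T y" y] by (simp add: inner_commute)
  finally have "0 \<le> inner (T y) y - 2 * inner (T y) (T y) + inner (T (T y)) (T y)" by simp
  with le[of "T y"] show 1: "(norm (T y))\<^sup>2 \<le> inner (T y) y"
    by (simp add: power2_norm_eq_inner)
  also have "\<dots> \<le> norm (T y) * norm y" by (rule norm_cauchy_schwarz)
  finally have "norm (T y) * norm (T y) \<le> norm (T y) * norm y" by (simp add: power2_eq_square)
  then show "norm (T y) \<le> norm y"
    by (cases "norm (T y) = 0") auto
  have "(norm (y - T y))\<^sup>2 = (norm y)\<^sup>2 - 2 * inner (T y) y + (norm (T y))\<^sup>2"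
    by (simp add: power2_norm_eq_inner inner_diff_left inner_diff_right inner_commute)
  with 1 show "(norm (y - T y))\<^sup>2 \<le> (norm y)\<^sup>2 - (norm (T y))\<^sup>2" by simp
qed

lemma carat:
  fixes \<Phi> :: "'w \<Rightarrow> ('a::{real_normed_vector, second_countable_topology} \<Rightarrow>\<^sub>L 'b::{real_normed_vector, second_countable_topology})"
  assumes Y: "Y \<in> borel_measurable N" and \<Phi>: "\<And>y. (\<lambda>\<omega>. \<Phi> \<omega> y) \<in> borel_measurable N"
  shows "(\<lambda>\<omega>. \<Phi> \<omega> (Y \<omega>)) \<in> borel_measurable N"
proof -
  obtain F where F: "\<And>i. simple_function N (F i)" "\<And>\<omega>. \<omega> \<in> space N \<Longrightarrow> (\<lambda>i. F i \<omega>) \<longlonglongrightarrow> Y \<omega>"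
    using borel_measurable_implies_sequence_metric[OF Y, of 0] by blast
  define G where "G i \<omega> = (\<Sum>y\<in>F i ` space N. indicator (F i -` {y} \<inter> space N) \<omega> *\<^sub>R \<Phi> \<omega> y)" for i \<omega>
  have Gm: "G i \<in> borel_measurable N" for i
    unfolding G_def
    apply (rule borel_measurable_sum)
    apply (rule borel_measurable_scaleR)
     apply (rule borel_measurable_indicator)
     apply (rule simple_functionD(2)[OF F(1)])
    apply (rule \<Phi>)
    done
  have Geq: "G i \<omega> = \<Phi> \<omega> (F i \<omega>)" if "\<omega> \<in> space N" for i \<omega>
  proof -
    have "G i \<omega> = (\<Sum>y\<in>F i ` space N. if F i \<omega> = y then \<Phi> \<omega> y else 0)"
      unfolding G_def by (intro sum.cong) (auto simp: indicator_def that)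
    also have "\<dots> = \<Phi> \<omega> (F i \<omega>)"
      using simple_functionD(1)[OF F(1)] that by (simp add: sum.delta)
    finally show ?thesis .
  qed
  show ?thesis
  proof (rule borel_measurable_LIMSEQ_metric[OF Gm])
    fix \<omega> assume w: "\<omega> \<in> space N"
    have "(\<lambda>i. \<Phi> \<omega> (F i \<omega>)) \<longlonglongrightarrow> \<Phi> \<omega> (Y \<omega>)"
      by (rule bounded_linear.tendsto[OF blinfun.bounded_linear_right F(2)[OF w]])
    then show "(\<lambda>i. G i \<omega>) \<longlonglongrightarrow> \<Phi> \<omega> (Y \<omega>)" using Geq[OF w] by simp
  qed
qed

lemma sum_indicator_simple:
  assumes "x \<in> space N" "finite (F ` space N)"
  shows "(\<Sum>y\<in>F ` space N. indicator (F -` {y} \<inter> space N) x * g y) = (g (F x)::real)"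
proof -
  have "(\<Sum>y\<in>F ` space N. indicator (F -` {y} \<inter> space N) x * g y)
      = (\<Sum>y\<in>F ` space N. if F x = y then g y else 0)"
    by (intro sum.cong) (auto simp: indicator_def assms)
  also have "\<dots> = g (F x)" using assms by (simp add: sum.delta)
  finally show ?thesis .
qed

lemma indep_sub:
  assumes P: "prob_space M" and ind: "prob_space.indep_set M (sets N) (sets G)"
    and sp: "space N = space M" "space G = space M"
    and X1: "X1 \<in> borel_measurable N" and X2: "X2 \<in> borel_measurable G"
  shows "prob_space.indep_var M borel X1 borel X2"
proof -
  interpret prob_space M by fact
  from ind have evN: "sets N \<subseteq> events" and evG: "sets G \<subseteq> events"
    and pr: "\<And>a b. a \<in> sets N \<Longrightarrow> b \<in> sets G \<Longrightarrow> prob (a \<inter> b) = prob a * prob b"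
    using indep_sets2_eq by auto
  have m1: "X1 \<in> borel_measurable M"
    using measurable_from_subalg[of M N] X1 evN sp by (auto simp: subalgebra_def)
  have m2: "X2 \<in> borel_measurable M"
    using measurable_from_subalg[of M G] X2 evG sp by (auto simp: subalgebra_def)
  have "{X1 -` A \<inter> space M | A. A \<in> sets borel} \<subseteq> sets N"
    using measurable_sets[OF X1] sp by auto
  from sets.sigma_sets_subset[OF this] sp
  have s1: "sigma_sets (space M) {X1 -` A \<inter> space M | A. A \<in> sets borel} \<subseteq> sets N" by simp
  have "{X2 -` A \<inter> space M | A. A \<in> sets borel} \<subseteq> sets G"
    using measurable_sets[OF X2] sp by auto
  from sets.sigma_sets_subset[OF this] sp
  have s2: "sigma_sets (space M) {X2 -` A \<inter> space M | A. A \<in> sets borel} \<subseteq> sets G" by simp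
  show ?thesis
    unfolding indep_var_eq indep_sets2_eq
    using m1 m2 s1 s2 evN evG pr by blast
qed

lemma key_ineq:
  fixes \<Psi> :: "'w \<Rightarrow> ('a::{real_inner, complete_space, second_countable_topology} \<Rightarrow>\<^sub>L 'a)"
  assumes P: "prob_space M"
    and ind: "prob_space.indep_set M (sets N) (sets G)"
    and sp: "space N = space M" "space G = space M"
    and \<Psi>m: "\<And>y. (\<lambda>\<omega>. \<Psi> \<omega> y) \<in> borel_measurable G"
    and \<Psi>b: "\<And>\<omega> y. \<omega> \<in> space M \<Longrightarrow> norm (\<Psi> \<omega> y) \<le> norm y"
    and Y: "Y \<in> borel_measurable N" and Yb: "\<And>\<omega>. \<omega> \<in> space M \<Longrightarrow> norm (Y \<omega>) \<le> B"
    and lb: "\<And>y. C * (norm y)\<^sup>2 \<le> (\<integral>\<omega>. (norm (\<Psi> \<omega> y))\<^sup>2 \<partial>M)"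
  shows "C * (\<integral>\<omega>. (norm (Y \<omega>))\<^sup>2 \<partial>M) \<le> (\<integral>\<omega>. (norm (\<Psi> \<omega> (Y \<omega>)))\<^sup>2 \<partial>M)"
proof -
  interpret prob_space M by fact
  from ind have evN: "sets N \<subseteq> events" and evG: "sets G \<subseteq> events"
    using indep_sets2_eq by auto
  have mN: "f \<in> borel_measurable M" if "f \<in> borel_measurable N" for f :: "'w \<Rightarrow> 'b::topological_space"
    using measurable_from_subalg[of M N] that evN sp by (auto simp: subalgebra_def)
  have mG: "f \<in> borel_measurable M" if "f \<in> borel_measurable G" for f :: "'w \<Rightarrow> 'b::topological_space"
    using measurable_from_subalg[of M G] that evG sp by (auto simp: subalgebra_def)
  have \<Psi>M: "(\<lambda>\<omega>. \<Psi> \<omega> y) \<in> borel_measurable M" for y by (rule mG[OF \<Psi>m])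
  have YM: "Y \<in> borel_measurable M" by (rule mN[OF Y])
  have B0: "0 \<le> B" using Yb[of "SOME x. x \<in> space M"] not_empty some_in_eq
    by (metis norm_ge_zero order_trans)
  obtain F where F: "\<And>i. simple_function N (F i)"
      "\<And>\<omega>. \<omega> \<in> space N \<Longrightarrow> (\<lambda>i. F i \<omega>) \<longlonglongrightarrow> Y \<omega>"
      "\<And>i \<omega>. \<omega> \<in> space N \<Longrightarrow> dist (F i \<omega>) 0 \<le> 2 * dist (Y \<omega>) 0"
    using borel_measurable_implies_sequence_metric[OF Y, of 0] by blast
  have FN: "F i \<in> borel_measurable N" for i
    by (rule borel_measurable_simple_function[OF F(1)])
  have FM: "F i \<in> borel_measurable M" for i by (rule mN[OF FN])
  have Fb: "norm (F i \<omega>) \<le> 2 * B" if "\<omega> \<in> space M" for i \<omega>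
    using F(3)[of \<omega> i] Yb[OF that] that sp by simp
  have sq: "(norm z)\<^sup>2 \<le> (2 * B)\<^sup>2" if "norm z \<le> 2 * B" for z :: 'a
    using that by (intro power_mono) auto
  have step: "C * (\<integral>\<omega>. (norm (F i \<omega>))\<^sup>2 \<partial>M) \<le> (\<integral>\<omega>. (norm (\<Psi> \<omega> (F i \<omega>)))\<^sup>2 \<partial>M)" for i
  proof -
    define S where "S = F i ` space N"
    define A where "A y = F i -` {y} \<inter> space N" for y
    have finS: "finite S" unfolding S_def by (rule simple_functionD(1)[OF F(1)])
    have AN: "A y \<in> sets N" for y unfolding A_def by (rule simple_functionD(2)[OF F(1)])
    have AM: "A y \<in> events" for y using AN evN by auto
    have indM: "indicator (A y) \<in> borel_measurable M" for y
      using AM by (rule borel_measurable_indicator)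
    have gG: "(\<lambda>\<omega>. (norm (\<Psi> \<omega> y))\<^sup>2) \<in> borel_measurable G" for y
      using \<Psi>m[of y] by measurable
    have gM: "(\<lambda>\<omega>. (norm (\<Psi> \<omega> y))\<^sup>2) \<in> borel_measurable M" for y by (rule mG[OF gG])
    have int_g: "integrable M (\<lambda>\<omega>. (norm (\<Psi> \<omega> y))\<^sup>2)" for y
    proof (rule integrable_const_bound[where B="(norm y)\<^sup>2"])
      show "AE x in M. norm ((norm (\<Psi> x y))\<^sup>2) \<le> (norm y)\<^sup>2"
        by (rule AE_I2) (auto intro!: power_mono \<Psi>b)
    qed (rule gM)
    have int_i: "integrable M (indicator (A y) :: 'w \<Rightarrow> real)" for y
      by (rule integrable_const_bound[where B=1]) (auto intro!: indM simp: indicator_def)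
    have iv: "indep_var borel (indicator (A y) :: 'w \<Rightarrow> real) borel (\<lambda>\<omega>. (norm (\<Psi> \<omega> y))\<^sup>2)" for y
      by (rule indep_sub[OF P ind sp borel_measurable_indicator[OF AN] gG])
    have e1: "(\<integral>\<omega>. (norm (\<Psi> \<omega> (F i \<omega>)))\<^sup>2 \<partial>M)
        = (\<integral>\<omega>. (\<Sum>y\<in>S. indicator (A y) \<omega> * (norm (\<Psi> \<omega> y))\<^sup>2) \<partial>M)"
      unfolding S_def A_def
    proof (rule Bochner_Integration.integral_cong[OF refl])
      fix \<omega> assume "\<omega> \<in> space M"
      then show "(norm (\<Psi> \<omega> (F i \<omega>)))\<^sup>2 = (\<Sum>y\<in>F i ` space N. indicator (F i -` {y} \<inter> space N) \<omega> * (norm (\<Psi> \<omega> y))\<^sup>2)"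
        using sum_indicator_simple[of \<omega> N "F i" "\<lambda>y. (norm (\<Psi> \<omega> y))\<^sup>2"] simple_functionD(1)[OF F(1)] sp by simp
    qed
    also have "\<dots> = (\<Sum>y\<in>S. (\<integral>\<omega>. indicator (A y) \<omega> * (norm (\<Psi> \<omega> y))\<^sup>2 \<partial>M))"
      by (rule Bochner_Integration.integral_sum) (rule indep_var_integrable[OF iv int_i int_g])
    also have "\<dots> = (\<Sum>y\<in>S. prob (A y) * (\<integral>\<omega>. (norm (\<Psi> \<omega> y))\<^sup>2 \<partial>M))"
      by (intro sum.cong refl, subst indep_var_lebesgue_integral[OF iv int_i int_g])
         (simp add: AM)
    finally have E1: "(\<integral>\<omega>. (norm (\<Psi> \<omega> (F i \<omega>)))\<^sup>2 \<partial>M) = (\<Sum>y\<in>S. prob (A y) * (\<integral>\<omega>. (norm (\<Psi> \<omega> y))\<^sup>2 \<partial>M))" .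
    have "(\<integral>\<omega>. (norm (F i \<omega>))\<^sup>2 \<partial>M)
        = (\<integral>\<omega>. (\<Sum>y\<in>S. indicator (A y) \<omega> * (norm y)\<^sup>2) \<partial>M)"
      unfolding S_def A_def
    proof (rule Bochner_Integration.integral_cong[OF refl])
      fix \<omega> assume "\<omega> \<in> space M"
      then show "(norm (F i \<omega>))\<^sup>2 = (\<Sum>y\<in>F i ` space N. indicator (F i -` {y} \<inter> space N) \<omega> * (norm y)\<^sup>2)"
        using sum_indicator_simple[of \<omega> N "F i" "\<lambda>y. (norm y)\<^sup>2"] simple_functionD(1)[OF F(1)] sp by simp
    qed
    also have "\<dots> = (\<Sum>y\<in>S. (\<integral>\<omega>. indicator (A y) \<omega> * (norm y)\<^sup>2 \<partial>M))"
      by (rule Bochner_Integration.integral_sum) (intro integrable_mult_left int_i)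
    also have "\<dots> = (\<Sum>y\<in>S. prob (A y) * (norm y)\<^sup>2)"
      by (intro sum.cong refl) (simp add: AM)
    finally have E2: "(\<integral>\<omega>. (norm (F i \<omega>))\<^sup>2 \<partial>M) = (\<Sum>y\<in>S. prob (A y) * (norm y)\<^sup>2)" .
    have "C * (\<Sum>y\<in>S. prob (A y) * (norm y)\<^sup>2) = (\<Sum>y\<in>S. prob (A y) * (C * (norm y)\<^sup>2))"
      by (simp add: sum_distrib_left algebra_simps)
    also have "\<dots> \<le> (\<Sum>y\<in>S. prob (A y) * (\<integral>\<omega>. (norm (\<Psi> \<omega> y))\<^sup>2 \<partial>M))"
      by (intro sum_mono mult_left_mono lb) auto
    finally show ?thesis using E1 E2 by simp
  qed
  have lim1: "(\<lambda>i. \<integral>\<omega>. (norm (F i \<omega>))\<^sup>2 \<partial>M) \<longlonglongrightarrow> (\<integral>\<omega>. (norm (Y \<omega>))\<^sup>2 \<partial>M)"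
  proof (rule integral_dominated_convergence[where w="\<lambda>_. (2 * B)\<^sup>2"])
    show "(\<lambda>\<omega>. (norm (Y \<omega>))\<^sup>2) \<in> borel_measurable M" using YM by measurable
    show "(\<lambda>\<omega>. (norm (F i \<omega>))\<^sup>2) \<in> borel_measurable M" for i using FM[of i] by measurable
    show "AE x in M. (\<lambda>i. (norm (F i x))\<^sup>2) \<longlonglongrightarrow> (norm (Y x))\<^sup>2"
      by (rule AE_I2) (intro tendsto_intros F(2), simp add: sp)
    show "AE x in M. norm ((norm (F i x))\<^sup>2) \<le> (2 * B)\<^sup>2" for i
      by (rule AE_I2) (use sq[OF Fb] in auto)
  qed simp
  have PY: "(\<lambda>\<omega>. \<Psi> \<omega> (Y \<omega>)) \<in> borel_measurable M" by (rule carat[OF YM \<Psi>M])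
  have PF: "(\<lambda>\<omega>. \<Psi> \<omega> (F i \<omega>)) \<in> borel_measurable M" for i by (rule carat[OF FM \<Psi>M])
  have lim2: "(\<lambda>i. \<integral>\<omega>. (norm (\<Psi> \<omega> (F i \<omega>)))\<^sup>2 \<partial>M) \<longlonglongrightarrow> (\<integral>\<omega>. (norm (\<Psi> \<omega> (Y \<omega>)))\<^sup>2 \<partial>M)"
  proof (rule integral_dominated_convergence[where w="\<lambda>_. (2 * B)\<^sup>2"])
    show "(\<lambda>\<omega>. (norm (\<Psi> \<omega> (Y \<omega>)))\<^sup>2) \<in> borel_measurable M" using PY by measurable
    show "(\<lambda>\<omega>. (norm (\<Psi> \<omega> (F i \<omega>)))\<^sup>2) \<in> borel_measurable M" for i using PF[of i] by measurable
    show "AE x in M. (\<lambda>i. (norm (\<Psi> x (F i x)))\<^sup>2) \<longlonglongrightarrow> (norm (\<Psi> x (Y x)))\<^sup>2"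
      by (rule AE_I2) (intro tendsto_intros bounded_linear.tendsto[OF blinfun.bounded_linear_right] F(2), simp add: sp)
    show "AE x in M. norm ((norm (\<Psi> x (F i x)))\<^sup>2) \<le> (2 * B)\<^sup>2" for i
      by (rule AE_I2) (use sq[OF order_trans[OF \<Psi>b Fb]] in auto)
  qed simp
  show ?thesis
    by (rule LIMSEQ_le[OF tendsto_mult_left[OF lim1] lim2]) (use step in auto)
qed

lemma op_events_sub:
  assumes "strongly_measurable_op M \<Phi>"
  shows "op_events M \<Phi> \<subseteq> sets M"
  unfolding op_events_def
  by (rule sets.sigma_sets_subset)
     (use assms in \<open>auto simp: strongly_measurable_op_def intro: measurable_sets\<close>)

lemma op_events_pow: "op_events M \<Phi> \<subseteq> Pow (space M)"
  unfolding op_events_def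
  by (rule subsetI, rule PowI, erule sigma_sets_into_sp[rotated]) auto

lemma meas_gen:
  fixes \<Phi> :: "'w \<Rightarrow> ('a::real_normed_vector \<Rightarrow>\<^sub>L 'a)"
  assumes "op_events M \<Phi> \<subseteq> sets K" "space K = space M"
  shows "(\<lambda>\<omega>. \<Phi> \<omega> y) \<in> borel_measurable K"
proof (rule measurableI)
  fix A :: "'a set" assume "A \<in> sets borel"
  then have "(\<lambda>\<omega>. \<Phi> \<omega> y) -` A \<inter> space M \<in> op_events M \<Phi>"
    unfolding op_events_def by (intro sigma_sets.Basic) blast
  then show "(\<lambda>\<omega>. \<Phi> \<omega> y) -` A \<inter> space K \<in> sets K" using assms by auto
qed auto

lemma fdd_int:
  fixes \<Phi> :: "'w \<Rightarrow> ('a::{real_normed_vector, second_countable_topology} \<Rightarrow>\<^sub>L 'a)"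
  assumes "strongly_measurable_op M \<Phi>"
  shows "(\<integral>\<omega>. (norm (\<Phi> \<omega> y))\<^sup>2 \<partial>M) = (\<integral>f. (norm (f 0))\<^sup>2 \<partial>(op_fdd M \<Phi> [y]))"
proof -
  have T: "(\<lambda>\<omega>. \<lambda>i\<in>{..<length [y]}. \<Phi> \<omega> ([y] ! i)) \<in> measurable M (Pi\<^sub>M {..<length [y]} (\<lambda>_. borel))"
    using assms unfolding strongly_measurable_op_def by (intro measurable_restrict) auto
  have g: "(\<lambda>f. (norm (f 0))\<^sup>2) \<in> borel_measurable (Pi\<^sub>M {..<length [y]} (\<lambda>_. (borel :: 'a measure)))"
    by measurable
  show ?thesis
    unfolding op_fdd_def
    by (subst integral_distr[OF T g]) simp
qed

theorem mainTheorem3: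
  fixes M :: "'w measure"
    and \<Psi>s :: "nat \<Rightarrow> 'w \<Rightarrow> ('a::{real_inner, complete_space, second_countable_topology} \<Rightarrow>\<^sub>L 'a)"
    and \<Psi> :: "'w \<Rightarrow> ('a \<Rightarrow>\<^sub>L 'a)"
    and C :: real
  assumes "prob_space M"
    and "\<And>n. strongly_measurable_op M (\<Psi>s n)"
    and "strongly_measurable_op M \<Psi>"
    and "\<And>n \<omega>. \<omega> \<in> space M \<Longrightarrow> positive_contraction (\<Psi>s n \<omega>)"
    and "\<And>\<omega>. \<omega> \<in> space M \<Longrightarrow> positive_contraction (\<Psi> \<omega>)"
    and "prob_space.indep_sets M (\<lambda>n. op_events M (\<Psi>s n)) UNIV"
    and "\<And>n xs. op_fdd M (\<Psi>s n) xs = op_fdd M \<Psi> xs"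
    and "0 < C" and "C < 1"
    and "\<And>x. (\<integral>\<omega>. (norm (\<Psi> \<omega> x))\<^sup>2 \<partial>M) \<ge> C * (norm x)\<^sup>2"
  shows "(\<forall>x n. integrable M (\<lambda>\<omega>. (norm (Rprod \<Psi>s n \<omega> x))\<^sup>2) \<and>
                (\<integral>\<omega>. (norm (Rprod \<Psi>s n \<omega> x))\<^sup>2 \<partial>M) \<le> (1 - C) ^ n * (norm x)\<^sup>2)
       \<and> (\<forall>x. AE \<omega> in M. (\<lambda>n. norm (Rprod \<Psi>s n \<omega> x)) \<longlonglongrightarrow> 0)"
proof -
  note sm = assms(2) and pc = assms(4) and indep = assms(6) and fdd = assms(7)
  interpret P: prob_space M by fact
  define NN where "NN n = sigma (space M) (\<Union>i<n. op_events M (\<Psi>s i))" for n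
  define GG where "GG n = sigma (space M) (op_events M (\<Psi>s n))" for n
  have genN: "(\<Union>i<n. op_events M (\<Psi>s i)) \<subseteq> Pow (space M)" for n
    using op_events_pow by blast
  have sets_NN: "sets (NN n) = sigma_sets (space M) (\<Union>i<n. op_events M (\<Psi>s i))" for n
    unfolding NN_def using genN by (simp add: sets_measure_of)
  have space_NN: "space (NN n) = space M" for n
    unfolding NN_def using genN by (simp add: space_measure_of)
  have sets_GG: "sets (GG n) = sigma_sets (space M) (op_events M (\<Psi>s n))" for n
    unfolding GG_def using op_events_pow[of M "\<Psi>s n"] by (simp add: sets_measure_of)
  have space_GG: "space (GG n) = space M" for n
    unfolding GG_def using op_events_pow[of M "\<Psi>s n"] by (simp add: space_measure_of)
  have NN_M: "sets (NN n) \<subseteq> sets M" for n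
    unfolding sets_NN using op_events_sub[OF sm] by (intro sets.sigma_sets_subset) blast
  have ind: "P.indep_set (sets (NN n)) (sets (GG n))" for n
  proof -
    have "P.indep_sets (\<lambda>j. sigma_sets (space M) (\<Union>i\<in>case_bool {..<n} {n} j. op_events M (\<Psi>s i))) UNIV"
    proof (rule P.indep_sets_collect_sigma)
      show "P.indep_sets (\<lambda>n. op_events M (\<Psi>s n)) (\<Union>j\<in>UNIV. case_bool {..<n} {n} j)"
        by (rule P.indep_sets_mono_index[OF _ indep]) simp
      show "Int_stable (op_events M (\<Psi>s i))" for i
      proof -
        have "sigma_algebra (space M) (op_events M (\<Psi>s i))"
          unfolding op_events_def by (rule sigma_algebra_sigma_sets) auto
        then interpret S: sigma_algebra "space M" "op_events M (\<Psi>s i)" .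
        show ?thesis by (auto simp: Int_stable_def)
      qed
      show "disjoint_family_on (case_bool {..<n} {n}) UNIV"
        by (auto simp: disjoint_family_on_def split: bool.splits)
    qed
    moreover have "(\<lambda>j. sigma_sets (space M) (\<Union>i\<in>case_bool {..<n} {n} j. op_events M (\<Psi>s i)))
        = case_bool (sets (NN n)) (sets (GG n))"
      by (rule ext) (auto simp: sets_NN sets_GG split: bool.splits)
    ultimately show ?thesis unfolding P.indep_set_def by simp
  qed
  have \<Psi>N: "(\<lambda>\<omega>. \<Psi>s i \<omega> y) \<in> borel_measurable (NN n)" if "i < n" for i n y
    by (rule meas_gen[OF _ space_NN]) (use that in \<open>auto simp: sets_NN\<close>)
  have \<Psi>G: "(\<lambda>\<omega>. \<Psi>s n \<omega> y) \<in> borel_measurable (GG n)" for n y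
    by (rule meas_gen[OF _ space_GG]) (auto simp: sets_GG)
  have Rsuc: "Rprod \<Psi>s (Suc n) \<omega> x = Rprod \<Psi>s n \<omega> x - \<Psi>s n \<omega> (Rprod \<Psi>s n \<omega> x)" for n \<omega> x
    by (simp add: blinfun.diff_left)
  have RN: "(\<lambda>\<omega>. Rprod \<Psi>s n \<omega> x) \<in> borel_measurable (NN n)" for n x
  proof (induction n arbitrary: x)
    case 0
    then show ?case by simp
  next
    case (Suc n)
    have sa: "subalgebra (NN (Suc n)) (NN n)"
      unfolding subalgebra_def space_NN sets_NN
      by (auto intro!: sigma_sets_mono' simp: lessThan_Suc)
    have R: "(\<lambda>\<omega>. Rprod \<Psi>s n \<omega> x) \<in> borel_measurable (NN (Suc n))"
      by (rule measurable_from_subalg[OF sa Suc.IH])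
    have "(\<lambda>\<omega>. \<Psi>s n \<omega> (Rprod \<Psi>s n \<omega> x)) \<in> borel_measurable (NN (Suc n))"
      by (rule carat[OF R \<Psi>N]) simp
    with R show ?case unfolding Rsuc by (intro borel_measurable_diff)
  qed
  have RM: "(\<lambda>\<omega>. Rprod \<Psi>s n \<omega> x) \<in> borel_measurable M" for n x
    using measurable_from_subalg[OF _ RN] NN_M space_NN by (auto simp: subalgebra_def)
  have contr: "norm (y - T y) \<le> norm y" if "positive_contraction T" for T :: "'a \<Rightarrow>\<^sub>L 'a" and y
  proof -
    have "(norm (y - T y))\<^sup>2 \<le> (norm y)\<^sup>2" using pc_ineq(3)[OF that, of y] zero_le_power2[of "norm (T y)"] by linarith
    then show ?thesis using power2_le_imp_le norm_ge_zero by blast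
  qed
  have Rdec: "norm (Rprod \<Psi>s (Suc n) \<omega> x) \<le> norm (Rprod \<Psi>s n \<omega> x)" if "\<omega> \<in> space M" for n \<omega> x
    unfolding Rsuc by (rule contr[OF pc[OF that]])
  have Rb: "norm (Rprod \<Psi>s n \<omega> x) \<le> norm x" if "\<omega> \<in> space M" for n \<omega> x
  proof (induction n)
    case 0
    then show ?case by simp
  next
    case (Suc n)
    show ?case using order_trans[OF Rdec[OF that] Suc.IH] .
  qed
  have sqb: "(norm (Rprod \<Psi>s n \<omega> x))\<^sup>2 \<le> (norm x)\<^sup>2" if "\<omega> \<in> space M" for n \<omega> x
    by (rule power_mono[OF Rb[OF that]]) simp
  have intR: "integrable M (\<lambda>\<omega>. (norm (Rprod \<Psi>s n \<omega> x))\<^sup>2)" for n x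
  proof (rule P.integrable_const_bound[where B="(norm x)\<^sup>2"])
    show "AE \<omega> in M. norm ((norm (Rprod \<Psi>s n \<omega> x))\<^sup>2) \<le> (norm x)\<^sup>2"
      by (rule AE_I2) (use sqb in auto)
    show "(\<lambda>\<omega>. (norm (Rprod \<Psi>s n \<omega> x))\<^sup>2) \<in> borel_measurable M" using RM[of n x] by measurable
  qed
  have lb: "C * (norm y)\<^sup>2 \<le> (\<integral>\<omega>. (norm (\<Psi>s n \<omega> y))\<^sup>2 \<partial>M)" for n y
    using assms(10)[of y] fdd_int[OF sm, of n y] fdd_int[OF assms(3), of y] fdd[of n "[y]"] by simp
  have \<Psi>b: "norm (\<Psi>s n \<omega> y) \<le> norm y" if "\<omega> \<in> space M" for n \<omega> y
    by (rule pc_ineq(2)[OF pc[OF that]])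
  have rec: "(\<integral>\<omega>. (norm (Rprod \<Psi>s (Suc n) \<omega> x))\<^sup>2 \<partial>M) \<le> (1 - C) * (\<integral>\<omega>. (norm (Rprod \<Psi>s n \<omega> x))\<^sup>2 \<partial>M)" for n x
  proof -
    let ?Y = "\<lambda>\<omega>. Rprod \<Psi>s n \<omega> x"
    have PYm: "(\<lambda>\<omega>. \<Psi>s n \<omega> (?Y \<omega>)) \<in> borel_measurable M"
      by (rule carat[OF RM]) (use sm in \<open>auto simp: strongly_measurable_op_def\<close>)
    have intP: "integrable M (\<lambda>\<omega>. (norm (\<Psi>s n \<omega> (?Y \<omega>)))\<^sup>2)"
    proof (rule P.integrable_const_bound[where B="(norm x)\<^sup>2"])
      show "AE \<omega> in M. norm ((norm (\<Psi>s n \<omega> (?Y \<omega>)))\<^sup>2) \<le> (norm x)\<^sup>2"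
      proof (rule AE_I2)
        fix \<omega> assume w: "\<omega> \<in> space M"
        have "norm (\<Psi>s n \<omega> (?Y \<omega>)) \<le> norm x" using order_trans[OF \<Psi>b[OF w] Rb[OF w]] .
        then show "norm ((norm (\<Psi>s n \<omega> (?Y \<omega>)))\<^sup>2) \<le> (norm x)\<^sup>2" by (simp add: power_mono)
      qed
      show "(\<lambda>\<omega>. (norm (\<Psi>s n \<omega> (?Y \<omega>)))\<^sup>2) \<in> borel_measurable M" using PYm by measurable
    qed
    have "(\<integral>\<omega>. (norm (Rprod \<Psi>s (Suc n) \<omega> x))\<^sup>2 \<partial>M)
        \<le> (\<integral>\<omega>. (norm (?Y \<omega>))\<^sup>2 - (norm (\<Psi>s n \<omega> (?Y \<omega>)))\<^sup>2 \<partial>M)"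
      by (rule Bochner_Integration.integral_mono[OF intR Bochner_Integration.integrable_diff[OF intR intP]])
         (subst Rsuc, erule pc_ineq(3)[OF pc])
    also have "\<dots> = (\<integral>\<omega>. (norm (?Y \<omega>))\<^sup>2 \<partial>M) - (\<integral>\<omega>. (norm (\<Psi>s n \<omega> (?Y \<omega>)))\<^sup>2 \<partial>M)"
      by (rule Bochner_Integration.integral_diff[OF intR intP])
    also have "\<dots> \<le> (\<integral>\<omega>. (norm (?Y \<omega>))\<^sup>2 \<partial>M) - C * (\<integral>\<omega>. (norm (?Y \<omega>))\<^sup>2 \<partial>M)"
      using key_ineq[OF assms(1) ind space_NN space_GG \<Psi>G \<Psi>b RN Rb lb] by simp
    finally show ?thesis by (simp add: algebra_simps)
  qed
  have bound: "(\<integral>\<omega>. (norm (Rprod \<Psi>s n \<omega> x))\<^sup>2 \<partial>M) \<le> (1 - C) ^ n * (norm x)\<^sup>2" for n x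
  proof (induction n)
    case 0
    then show ?case by (simp add: P.prob_space)
  next
    case (Suc n)
    have "(\<integral>\<omega>. (norm (Rprod \<Psi>s (Suc n) \<omega> x))\<^sup>2 \<partial>M) \<le> (1 - C) * (\<integral>\<omega>. (norm (Rprod \<Psi>s n \<omega> x))\<^sup>2 \<partial>M)"
      by (rule rec)
    also have "\<dots> \<le> (1 - C) * ((1 - C) ^ n * (norm x)\<^sup>2)"
      by (rule mult_left_mono[OF Suc.IH]) (use assms(9) in simp)
    finally show ?case by simp
  qed
  have ae: "AE \<omega> in M. (\<lambda>n. norm (Rprod \<Psi>s n \<omega> x)) \<longlonglongrightarrow> 0" for x
  proof -
    let ?h = "\<lambda>n \<omega>. (norm (Rprod \<Psi>s n \<omega> x))\<^sup>2"
    define L where "L \<omega> = lim (\<lambda>n. ?h n \<omega>)" for \<omega>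
    have conv: "(\<lambda>n. ?h n \<omega>) \<longlonglongrightarrow> L \<omega> \<and> (\<forall>n. L \<omega> \<le> ?h n \<omega>)" if "\<omega> \<in> space M" for \<omega>
    proof -
      have "decseq (\<lambda>n. ?h n \<omega>)"
        by (rule decseq_SucI) (use power_mono[OF Rdec[OF that]] in simp)
      from decseq_convergent[OF this, of 0] obtain L' where
        "(\<lambda>n. ?h n \<omega>) \<longlonglongrightarrow> L'" "\<forall>n. L' \<le> ?h n \<omega>" by auto
      then show ?thesis unfolding L_def using limI by metis
    qed
    have hm: "(\<lambda>\<omega>. ?h i \<omega>) \<in> borel_measurable M" for i using RM[of i x] by measurable
    have Lm: "L \<in> borel_measurable M"
      by (rule borel_measurable_LIMSEQ_metric[where f="\<lambda>i \<omega>. ?h i \<omega>", OF hm]) (use conv in blast)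
    have L0: "0 \<le> L \<omega>" if "\<omega> \<in> space M" for \<omega>
      using conv[OF that] by (meson LIMSEQ_le_const zero_le_power2)
    have Lb: "L \<omega> \<le> ?h n \<omega>" if "\<omega> \<in> space M" for \<omega> n using conv[OF that] by blast
    have intL: "integrable M L"
    proof (rule P.integrable_const_bound[where B="(norm x)\<^sup>2"])
      show "AE \<omega> in M. norm (L \<omega>) \<le> (norm x)\<^sup>2"
        by (rule AE_I2) (use L0 Lb[of _ 0] in simp)
    qed (rule Lm)
    have "(\<integral>\<omega>. L \<omega> \<partial>M) \<le> (1 - C) ^ n * (norm x)\<^sup>2" for n
      by (rule order_trans[OF Bochner_Integration.integral_mono[OF intL intR Lb] bound])
    moreover have "(\<lambda>n. (1 - C) ^ n * (norm x)\<^sup>2) \<longlonglongrightarrow> 0 * (norm x)\<^sup>2"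
      by (intro tendsto_mult_right LIMSEQ_power_zero) (use assms(8,9) in auto)
    ultimately have "(\<integral>\<omega>. L \<omega> \<partial>M) \<le> 0"
      by (intro LIMSEQ_le_const) auto
    moreover have "0 \<le> (\<integral>\<omega>. L \<omega> \<partial>M)"
      by (rule Bochner_Integration.integral_nonneg) (use L0 in auto)
    ultimately have "(\<integral>\<omega>. L \<omega> \<partial>M) = 0" by simp
    then have "AE \<omega> in M. L \<omega> = 0"
      using integral_nonneg_eq_0_iff_AE[OF intL] L0 by (simp add: AE_I2)
    then show ?thesis
    proof (rule AE_mp)
      show "AE \<omega> in M. L \<omega> = 0 \<longrightarrow> (\<lambda>n. norm (Rprod \<Psi>s n \<omega> x)) \<longlonglongrightarrow> 0"
      proof (rule AE_I2, rule impI)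
        fix \<omega> assume w: "\<omega> \<in> space M" and "L \<omega> = 0"
        with conv[OF w] have "(\<lambda>n. ?h n \<omega>) \<longlonglongrightarrow> 0" by simp
        then have "(\<lambda>n. sqrt (?h n \<omega>)) \<longlonglongrightarrow> sqrt 0" by (rule tendsto_real_sqrt)
        then show "(\<lambda>n. norm (Rprod \<Psi>s n \<omega> x)) \<longlonglongrightarrow> 0" by simp
      qed
    qed
  qed
  show ?thesis using intR bound ae by blast
qed

end
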